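(* Let $N,M_t,M_r$ be positive integers, $P_0>0$, $\sigma^2>0$, $\alpha\in\mathbb C$, $L>0$, and $\theta,\theta_1,\theta_2\in\mathbb R$. Let $\mathbf G_t=\sqrt{L}\,\mathbf a(\theta_2)\mathbf c^T(\theta_1)\in\mathbb C^{N\times M_t}$ and $\mathbf G_r=\sqrt{L}\,\mathbf b(\theta_1)\mathbf a^T(\theta_2)\in\mathbb C^{M_r\times N}$. Then $\mathrm{SNR}_1^\star:=\max_{\mathbf R,\mathbf\Phi}\mathrm{SNR}_1(\mathbf R,\mathbf\Phi)=\frac{P_0|\alpha|^2L^2M_tM_rN^4}{\sigma^2}$ and $\mathrm{SNR}_2^\star:=\max_{\mathbf R,\mathbf\Phi}\mathrm{SNR}_2(\mathbf R,\mathbf\Phi)=\frac{P_0|\alpha|^2LM_tM_rN^2}{\sigma^2}$, where the maxima are over all positive semidefinite $\mathbf R\in\mathbb C^{M_t\times M_t}$ with $\mathrm{tr}(\mathbf R)\le P_0$ and all $\mathbf\Phi=\mathrm{diag}(e^{j\phi_1},\dots,e^{j\phi_N})$, $\phi_n\in\mathbb R$. In particular these grow proportionally to $N^4$ and $N^2$, respectively.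
   Context: $j=\sqrt{-1}$. Fix $\hat d>0$, $\lambda>0$. For a positive integer $K$, $\mathbf s_K(\theta)\in\mathbb C^K$ has $k$-th entry $e^{j\pi(2k-K-1)\hat d\sin\theta/\lambda}$. Set $\mathbf a(\theta)=\mathbf s_N(\theta)$, $\mathbf b(\theta)=\mathbf s_{M_r}(\theta)$, $\mathbf c(\theta)=\mathbf s_{M_t}(\theta)$. Define $\mathrm{SNR}_1(\mathbf R,\mathbf\Phi)=\frac{|\alpha|^2\|\mathbf G_r\mathbf\Phi^T\mathbf a(\theta)\|^2\,\mathbf a^T(\theta)\mathbf\Phi\mathbf G_t\mathbf R\mathbf G_t^H\mathbf\Phi^H\mathbf a^*(\theta)}{\sigma^2}$, $\mathrm{SNR}_2(\mathbf R,\mathbf\Phi)=\frac{|\alpha|^2\|\mathbf b(\theta)\|^2\,\mathbf a^T(\theta)\mathbf\Phi\mathbf G_t\mathbf R\mathbf G_t^H\mathbf\Phi^H\mathbf a^*(\theta)}{\sigma^2}$. *)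

theory Defs
  imports Complex_Main "Jordan_Normal_Form.Matrix" "Jordan_Normal_Form.Schur_Decomposition"
begin

text \<open>Steering vector s_K(theta) in C^K; entry k (1-based) is
  exp(j pi (2k-K-1) d sin(theta)/lambda). Here indices are 0-based, so entry k is
  exp(j pi (2k+1-K) d sin(theta)/lambda).\<close>
definition steer :: "real \<Rightarrow> real \<Rightarrow> nat \<Rightarrow> real \<Rightarrow> complex vec" where
  "steer d lam K \<theta> =
     vec K (\<lambda>k. exp (\<i> * complex_of_real (pi * (2 * real k + 1 - real K) * d * sin \<theta> / lam)))"

definition vnorm2 :: "complex vec \<Rightarrow> real" where
  "vnorm2 v = (\<Sum>i<dim_vec v. (cmod (v $ i))\<^sup>2)"

definition outer :: "complex vec \<Rightarrow> complex vec \<Rightarrow> complex mat" where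
  "outer u v = mat (dim_vec u) (dim_vec v) (\<lambda>(i, k). u $ i * v $ k)"

definition mtrace :: "complex mat \<Rightarrow> complex" where
  "mtrace A = (\<Sum>i<dim_row A. A $$ (i, i))"

definition psd :: "nat \<Rightarrow> complex mat \<Rightarrow> bool" where
  "psd n R \<longleftrightarrow> R \<in> carrier_mat n n \<and> mat_adjoint R = R \<and>
     (\<forall>x \<in> carrier_vec n. 0 \<le> Re (conjugate x \<bullet> (R *\<^sub>v x)))"

definition phase_mat :: "nat \<Rightarrow> (nat \<Rightarrow> real) \<Rightarrow> complex mat" where
  "phase_mat N \<phi> = mat_diag N (\<lambda>n. exp (\<i> * complex_of_real (\<phi> n)))"

text \<open>The quadratic form a^T Phi G_t R G_t^H Phi^H a^*, written as u^H R u with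
  u = G_t^H Phi^H a^*. It is real for Hermitian R; we take its real part.\<close>
definition txform :: "complex vec \<Rightarrow> complex mat \<Rightarrow> complex mat \<Rightarrow> complex mat \<Rightarrow> real" where
  "txform a Gt R Phi =
     (let u = (mat_adjoint Gt * mat_adjoint Phi) *\<^sub>v conjugate a in Re (conjugate u \<bullet> (R *\<^sub>v u)))"

definition SNR1 :: "real \<Rightarrow> real \<Rightarrow> nat \<Rightarrow> real \<Rightarrow> complex \<Rightarrow> real \<Rightarrow> complex mat \<Rightarrow> complex mat
     \<Rightarrow> complex mat \<Rightarrow> complex mat \<Rightarrow> real" where
  "SNR1 d lam N \<theta> \<alpha> \<sigma>2 Gt Gr R Phi =
     (let a = steer d lam N \<theta> in
      (cmod \<alpha>)\<^sup>2 * vnorm2 ((Gr * transpose_mat Phi) *\<^sub>v a) * txform a Gt R Phi / \<sigma>2)"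

definition SNR2 :: "real \<Rightarrow> real \<Rightarrow> nat \<Rightarrow> nat \<Rightarrow> real \<Rightarrow> complex \<Rightarrow> real \<Rightarrow> complex mat
     \<Rightarrow> complex mat \<Rightarrow> complex mat \<Rightarrow> real" where
  "SNR2 d lam N Mr \<theta> \<alpha> \<sigma>2 Gt R Phi =
     (let a = steer d lam N \<theta> in
      (cmod \<alpha>)\<^sup>2 * vnorm2 (steer d lam Mr \<theta>) * txform a Gt R Phi / \<sigma>2)"

end

theory Submission
  imports Defs
begin
lemma quad: assumes "x \<in> carrier_vec n" "R \<in> carrier_mat n n"
  shows "conjugate x \<bullet> (R *\<^sub>v x) = (\<Sum>k<n. cnj (x $ k) * (\<Sum>l<n. R $$ (k,l) * x $ l))"
  using assms by (auto simp: scalar_prod_def mult_mat_vec_def row_def atLeast0LessThan intro!: sum.cong)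

lemma pair_ineq:
  assumes R: "R \<in> carrier_mat n n" and pos: "\<forall>y \<in> carrier_vec n. 0 \<le> Re (conjugate y \<bullet> (R *\<^sub>v y))"
    and x: "x \<in> carrier_vec n" and i: "i < n" and j: "j < n"
  shows "Re (cnj (x$i) * R$$(i,j) * x$j + cnj (x$j) * R$$(j,i) * x$i)
         \<le> Re (cnj (x$i) * R$$(i,i) * x$i + cnj (x$j) * R$$(j,j) * x$j)"
proof -
  define y where "y = vec n (\<lambda>k. (if k = i then x$i else 0) - (if k = j then x$j else 0))"
  have yc: "y \<in> carrier_vec n" by (simp add: y_def)
  have inner: "(\<Sum>l<n. R $$ (k,l) * y $ l) = R$$(k,i) * x$i - R$$(k,j) * x$j" for k
  proof -
    have "(\<Sum>l<n. R $$ (k,l) * y $ l) = (\<Sum>l<n. R $$ (k,l) * (if l = i then x$i else 0)) - (\<Sum>l<n. R $$ (k,l) * (if l = j then x$j else 0))"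
      by (simp add: y_def right_diff_distrib sum_subtractf)
    also have "\<dots> = R$$(k,i) * x$i - R$$(k,j) * x$j"
      using i j by (simp add: if_distrib cong: if_cong)
    finally show ?thesis .
  qed
  have "conjugate y \<bullet> (R *\<^sub>v y) = (\<Sum>k<n. cnj (y $ k) * (R$$(k,i) * x$i - R$$(k,j) * x$j))"
    by (simp add: quad[OF yc R] inner)
  also have "\<dots> = cnj (x$i) * R$$(i,i) * x$i + cnj (x$j) * R$$(j,j) * x$j
      - (cnj (x$i) * R$$(i,j) * x$j + cnj (x$j) * R$$(j,i) * x$i)"
  proof -
    have "(\<Sum>k<n. cnj (y $ k) * (R$$(k,i) * x$i - R$$(k,j) * x$j)) = 
      (\<Sum>k<n. (if k = i then cnj (x$i) else 0) * (R$$(k,i) * x$i - R$$(k,j) * x$j)) - (\<Sum>k<n. (if k = j then cnj (x$j) else 0) * (R$$(k,i) * x$i - R$$(k,j) * x$j))"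
    proof -
      have "cnj (y $ k) = (if k = i then cnj (x$i) else 0) - (if k = j then cnj (x$j) else 0)" if "k < n" for k
        using that by (simp add: y_def)
      then show ?thesis by (simp add: left_diff_distrib sum_subtractf)
    qed
    also have "\<dots> = cnj (x$i) * (R$$(i,i) * x$i - R$$(i,j) * x$j) - cnj (x$j) * (R$$(j,i) * x$i - R$$(j,j) * x$j)"
      using i j by (simp add: if_distrib[where f="\<lambda>c. c * _"] cong: if_cong)
    finally show ?thesis by (simp add: algebra_simps)
  qed
  finally show ?thesis using pos yc by force
qed

lemma adj_index: "i < dim_col A \<Longrightarrow> j < dim_row A \<Longrightarrow> mat_adjoint A $$ (i,j) = cnj (A $$ (j,i))"
  and adj_dims: "dim_row (mat_adjoint A) = dim_col A" "dim_col (mat_adjoint A) = dim_row A"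
  by (auto simp: mat_adjoint_def mat_of_rows_def)

lemma mv_index: "i < dim_row A \<Longrightarrow> dim_vec v = dim_col A \<Longrightarrow> (A *\<^sub>v v) $ i = (\<Sum>k<dim_vec v. A $$ (i,k) * v $ k)"
  by (simp add: mult_mat_vec_def scalar_prod_def row_def atLeast0LessThan)

lemma steer_dim[simp]: "dim_vec (steer d lam K th) = K"
  by (simp add: steer_def)

lemma steer_index: "k < K \<Longrightarrow> steer d lam K th $ k = exp (\<i> * complex_of_real (pi * (2 * real k + 1 - real K) * d * sin th / lam))"
  by (simp add: steer_def)

lemma cmod_exp_ii: "cmod (exp (\<i> * complex_of_real t)) = 1"
  by (simp add: norm_exp_eq_Re)

lemma steer_cmod: "k < K \<Longrightarrow> cmod (steer d lam K th $ k) = 1"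
  by (simp add: steer_index cmod_exp_ii)

lemma vnorm2_steer: "vnorm2 (steer d lam K th) = real K"
  by (simp add: vnorm2_def steer_cmod)


lemma psd_bound:
  assumes R: "R \<in> carrier_mat n n" and pos: "\<forall>y \<in> carrier_vec n. 0 \<le> Re (conjugate y \<bullet> (R *\<^sub>v y))"
    and x: "x \<in> carrier_vec n" and cm: "\<forall>i<n. cmod (x $ i) = \<kappa>"
  shows "Re (conjugate x \<bullet> (R *\<^sub>v x)) \<le> real n * \<kappa>\<^sup>2 * Re (mtrace R)"
proof -
  define q where "q i j = cnj (x$i) * R$$(i,j) * x$j" for i j
  have Q: "Re (conjugate x \<bullet> (R *\<^sub>v x)) = (\<Sum>i<n. \<Sum>j<n. Re (q i j))"
    by (simp add: quad[OF x R] q_def sum_distrib_left mult.assoc Re_sum)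
  have sw: "(\<Sum>i<n. \<Sum>j<n. Re (q j i)) = (\<Sum>i<n. \<Sum>j<n. Re (q i j))"
    by (rule sum.swap)
  have "2 * Re (conjugate x \<bullet> (R *\<^sub>v x)) = (\<Sum>i<n. \<Sum>j<n. Re (q i j + q j i))"
    by (simp add: Q sum.distrib sw)
  also have "\<dots> \<le> (\<Sum>i<n. \<Sum>j<n. Re (q i i + q j j))"
    by (intro sum_mono) (use pair_ineq[OF R pos x] in \<open>simp add: q_def\<close>)
  also have "\<dots> = 2 * real n * (\<Sum>i<n. Re (q i i))"
    by (simp add: sum.distrib sum_distrib_left[symmetric] sum_constant)
  also have "(\<Sum>i<n. Re (q i i)) = \<kappa>\<^sup>2 * Re (mtrace R)"
  proof -
    have "Re (q i i) = \<kappa>\<^sup>2 * Re (R $$ (i,i))" if "i < n" for i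
    proof -
      have "q i i = R $$ (i,i) * complex_of_real ((cmod (x$i))\<^sup>2)"
      proof -
        have "cnj (x$i) * x$i = complex_of_real ((cmod (x$i))\<^sup>2)"
          by (metis complex_norm_square mult.commute of_real_power)
        then show ?thesis by (simp add: q_def mult_ac)
      qed
      then show ?thesis using cm that by (simp add: mult.commute)
    qed
    then show ?thesis using R by (simp add: mtrace_def Re_sum sum_distrib_left)
  qed
  finally show ?thesis by simp
qed


lemma phase_dims[simp]: "phase_mat N \<phi> \<in> carrier_mat N N"
  by (simp add: phase_mat_def)

lemma phase_dim_row[simp]: "dim_row (phase_mat N \<phi>) = N" and phase_dim_col[simp]: "dim_col (phase_mat N \<phi>) = N"
  by (simp_all add: phase_mat_def mat_diag_def)

lemma phase_index: "i < N \<Longrightarrow> j < N \<Longrightarrow> phase_mat N \<phi> $$ (i,j) = (if i = j then exp (\<i> * complex_of_real (\<phi> j)) else 0)"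
  by (simp add: phase_mat_def mat_diag_def)

lemma adj_phase_index: "i < N \<Longrightarrow> j < N \<Longrightarrow> mat_adjoint (phase_mat N \<phi>) $$ (i,j) = (if i = j then cnj (exp (\<i> * complex_of_real (\<phi> j))) else 0)"
  by (subst adj_index) (auto simp: phase_index)

lemma outer_dims[simp]: "outer u v \<in> carrier_mat (dim_vec u) (dim_vec v)"
  by (simp add: outer_def)

lemma outer_index: "i < dim_vec u \<Longrightarrow> j < dim_vec v \<Longrightarrow> outer u v $$ (i,j) = u $ i * v $ j"
  by (simp add: outer_def)

lemma w_vec: "mat_adjoint (phase_mat N \<phi>) *\<^sub>v conjugate (steer d lam N th)
   = vec N (\<lambda>n. cnj (exp (\<i> * complex_of_real (\<phi> n))) * cnj (steer d lam N th $ n))"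
proof (rule eq_vecI)
  show "dim_vec (mat_adjoint (phase_mat N \<phi>) *\<^sub>v conjugate (steer d lam N th)) = dim_vec (vec N (\<lambda>n. cnj (exp (\<i> * complex_of_real (\<phi> n))) * cnj (steer d lam N th $ n)))"
    using phase_dims[of N \<phi>] by (simp add: adj_dims)
  fix i assume "i < dim_vec (vec N (\<lambda>n. cnj (exp (\<i> * complex_of_real (\<phi> n))) * cnj (steer d lam N th $ n)))"
  then have i: "i < N" by simp
  have "(mat_adjoint (phase_mat N \<phi>) *\<^sub>v conjugate (steer d lam N th)) $ i
     = (\<Sum>k<N. mat_adjoint (phase_mat N \<phi>) $$ (i,k) * conjugate (steer d lam N th) $ k)"
    using phase_dims[of N \<phi>] i by (subst mv_index) (auto simp: adj_dims)
  also have "\<dots> = (\<Sum>k<N. (if i = k then cnj (exp (\<i> * complex_of_real (\<phi> k))) * cnj (steer d lam N th $ k) else 0))"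
    using i by (intro sum.cong) (auto simp: adj_phase_index)
  also have "\<dots> = cnj (exp (\<i> * complex_of_real (\<phi> i))) * cnj (steer d lam N th $ i)"
    using i by simp
  finally show "(mat_adjoint (phase_mat N \<phi>) *\<^sub>v conjugate (steer d lam N th)) $ i = vec N (\<lambda>n. cnj (exp (\<i> * complex_of_real (\<phi> n))) * cnj (steer d lam N th $ n)) $ i"
    using i by simp
qed

lemma u_vec:
  fixes L :: real
  assumes Gt_def: "Gt = complex_of_real (sqrt L) \<cdot>\<^sub>m outer (steer d lam N th2) (steer d lam Mt th1)"
  shows "(mat_adjoint Gt * mat_adjoint (phase_mat N \<phi>)) *\<^sub>v conjugate (steer d lam N th)
    = vec Mt (\<lambda>i. complex_of_real (sqrt L) * cnj (steer d lam Mt th1 $ i) *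
        cnj (\<Sum>n<N. steer d lam N th2 $ n * exp (\<i> * complex_of_real (\<phi> n)) * steer d lam N th $ n))"
proof -
  have G: "Gt \<in> carrier_mat N Mt" using outer_dims[of "steer d lam N th2" "steer d lam Mt th1"]
    by (simp add: Gt_def)
  have GA: "mat_adjoint Gt \<in> carrier_mat Mt N" using G by (intro carrier_matI) (auto simp: adj_dims)
  have PA: "mat_adjoint (phase_mat N \<phi>) \<in> carrier_mat N N" by (intro carrier_matI) (auto simp: adj_dims)
  have eq: "(mat_adjoint Gt * mat_adjoint (phase_mat N \<phi>)) *\<^sub>v conjugate (steer d lam N th)
     = mat_adjoint Gt *\<^sub>v (mat_adjoint (phase_mat N \<phi>) *\<^sub>v conjugate (steer d lam N th))"
    by (rule assoc_mult_mat_vec[OF GA PA]) (rule carrier_vecI, simp)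
  show ?thesis unfolding eq w_vec
  proof (rule eq_vecI)
    fix i assume "i < dim_vec (vec Mt (\<lambda>i. complex_of_real (sqrt L) * cnj (steer d lam Mt th1 $ i) *
        cnj (\<Sum>n<N. steer d lam N th2 $ n * exp (\<i> * complex_of_real (\<phi> n)) * steer d lam N th $ n)))"
    then have i: "i < Mt" by simp
    have "(mat_adjoint Gt *\<^sub>v vec N (\<lambda>n. cnj (exp (\<i> * complex_of_real (\<phi> n))) * cnj (steer d lam N th $ n))) $ i
       = (\<Sum>k<N. mat_adjoint Gt $$ (i,k) * (cnj (exp (\<i> * complex_of_real (\<phi> k))) * cnj (steer d lam N th $ k)))"
      using GA G i by (subst mv_index) auto
    also have "\<dots> = (\<Sum>k<N. complex_of_real (sqrt L) * cnj (steer d lam Mt th1 $ i) *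
        cnj (steer d lam N th2 $ k * exp (\<i> * complex_of_real (\<phi> k)) * steer d lam N th $ k))"
    proof (intro sum.cong refl)
      fix k assume "k \<in> {..<N}"
      then have k: "k < N" by simp
      have "mat_adjoint Gt $$ (i,k) = cnj (Gt $$ (k,i))" using G i k by (intro adj_index) auto
      also have "\<dots> = cnj (complex_of_real (sqrt L) * (steer d lam N th2 $ k * steer d lam Mt th1 $ i))"
        using i k by (simp add: Gt_def outer_def)
      finally show "mat_adjoint Gt $$ (i,k) * (cnj (exp (\<i> * complex_of_real (\<phi> k))) * cnj (steer d lam N th $ k)) = complex_of_real (sqrt L) * cnj (steer d lam Mt th1 $ i) *
        cnj (steer d lam N th2 $ k * exp (\<i> * complex_of_real (\<phi> k)) * steer d lam N th $ k)"
        by (simp add: mult_ac)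
    qed
    also have "\<dots> = complex_of_real (sqrt L) * cnj (steer d lam Mt th1 $ i) *
        cnj (\<Sum>n<N. steer d lam N th2 $ n * exp (\<i> * complex_of_real (\<phi> n)) * steer d lam N th $ n)"
      by (simp add: sum_distrib_left cnj_sum)
    finally show "(mat_adjoint Gt *\<^sub>v vec N (\<lambda>n. cnj (exp (\<i> * complex_of_real (\<phi> n))) * cnj (steer d lam N th $ n))) $ i = vec Mt (\<lambda>i. complex_of_real (sqrt L) * cnj (steer d lam Mt th1 $ i) *
        cnj (\<Sum>n<N. steer d lam N th2 $ n * exp (\<i> * complex_of_real (\<phi> n)) * steer d lam N th $ n)) $ i"
      using i by simp
  qed (use GA in simp)
qed

lemma r_vec:
  fixes L :: real
  assumes Gr_def: "Gr = complex_of_real (sqrt L) \<cdot>\<^sub>m outer (steer d lam Mr th1) (steer d lam N th2)"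
  shows "(Gr * transpose_mat (phase_mat N \<phi>)) *\<^sub>v steer d lam N th
    = vec Mr (\<lambda>i. complex_of_real (sqrt L) * steer d lam Mr th1 $ i *
        (\<Sum>n<N. steer d lam N th2 $ n * exp (\<i> * complex_of_real (\<phi> n)) * steer d lam N th $ n))"
proof -
  have G: "Gr \<in> carrier_mat Mr N" using outer_dims[of "steer d lam Mr th1" "steer d lam N th2"]
    by (simp add: Gr_def)
  have PT: "transpose_mat (phase_mat N \<phi>) \<in> carrier_mat N N" by simp
  have eq: "(Gr * transpose_mat (phase_mat N \<phi>)) *\<^sub>v steer d lam N th
     = Gr *\<^sub>v (transpose_mat (phase_mat N \<phi>) *\<^sub>v steer d lam N th)"
    by (rule assoc_mult_mat_vec[OF G PT]) (rule carrier_vecI, simp)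
  have w: "transpose_mat (phase_mat N \<phi>) *\<^sub>v steer d lam N th = vec N (\<lambda>n. exp (\<i> * complex_of_real (\<phi> n)) * steer d lam N th $ n)"
  proof (rule eq_vecI)
    fix i assume "i < dim_vec (vec N (\<lambda>n. exp (\<i> * complex_of_real (\<phi> n)) * steer d lam N th $ n))"
    then have i: "i < N" by simp
    have "(transpose_mat (phase_mat N \<phi>) *\<^sub>v steer d lam N th) $ i
      = (\<Sum>k<N. transpose_mat (phase_mat N \<phi>) $$ (i,k) * steer d lam N th $ k)"
      using i PT by (subst mv_index) auto
    also have "\<dots> = (\<Sum>k<N. (if i = k then exp (\<i> * complex_of_real (\<phi> k)) * steer d lam N th $ k else 0))"
      using i by (intro sum.cong) (auto simp: phase_index)
    also have "\<dots> = exp (\<i> * complex_of_real (\<phi> i)) * steer d lam N th $ i" using i by simp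
    finally show "(transpose_mat (phase_mat N \<phi>) *\<^sub>v steer d lam N th) $ i = vec N (\<lambda>n. exp (\<i> * complex_of_real (\<phi> n)) * steer d lam N th $ n) $ i"
      using i by simp
  qed (use PT in simp)
  show ?thesis unfolding eq w
  proof (rule eq_vecI)
    fix i assume "i < dim_vec (vec Mr (\<lambda>i. complex_of_real (sqrt L) * steer d lam Mr th1 $ i *
        (\<Sum>n<N. steer d lam N th2 $ n * exp (\<i> * complex_of_real (\<phi> n)) * steer d lam N th $ n)))"
    then have i: "i < Mr" by simp
    have "(Gr *\<^sub>v vec N (\<lambda>n. exp (\<i> * complex_of_real (\<phi> n)) * steer d lam N th $ n)) $ i
       = (\<Sum>k<N. Gr $$ (i,k) * (exp (\<i> * complex_of_real (\<phi> k)) * steer d lam N th $ k))"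
      using G i by (subst mv_index) auto
    also have "\<dots> = (\<Sum>k<N. complex_of_real (sqrt L) * steer d lam Mr th1 $ i *
        (steer d lam N th2 $ k * exp (\<i> * complex_of_real (\<phi> k)) * steer d lam N th $ k))"
    proof (intro sum.cong refl)
      fix k assume "k \<in> {..<N}"
      then have k: "k < N" by simp
      have "Gr $$ (i,k) = complex_of_real (sqrt L) * (steer d lam Mr th1 $ i * steer d lam N th2 $ k)"
        using i k by (simp add: Gr_def outer_def)
      then show "Gr $$ (i,k) * (exp (\<i> * complex_of_real (\<phi> k)) * steer d lam N th $ k) = complex_of_real (sqrt L) * steer d lam Mr th1 $ i *
        (steer d lam N th2 $ k * exp (\<i> * complex_of_real (\<phi> k)) * steer d lam N th $ k)"
        by (simp add: mult_ac)
    qed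
    also have "\<dots> = complex_of_real (sqrt L) * steer d lam Mr th1 $ i *
        (\<Sum>n<N. steer d lam N th2 $ n * exp (\<i> * complex_of_real (\<phi> n)) * steer d lam N th $ n)"
      by (simp add: sum_distrib_left)
    finally show "(Gr *\<^sub>v vec N (\<lambda>n. exp (\<i> * complex_of_real (\<phi> n)) * steer d lam N th $ n)) $ i = vec Mr (\<lambda>i. complex_of_real (sqrt L) * steer d lam Mr th1 $ i *
        (\<Sum>n<N. steer d lam N th2 $ n * exp (\<i> * complex_of_real (\<phi> n)) * steer d lam N th $ n)) $ i"
      using i by simp
  qed (use G in simp)
qed


lemma rank1_quad:
  fixes k0 :: real
  assumes x: "x \<in> carrier_vec n" and w: "dim_vec w = n"
  shows "conjugate x \<bullet> (mat n n (\<lambda>(i,j). complex_of_real k0 * cnj (w$i) * w$j) *\<^sub>v x)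
    = complex_of_real (k0 * (cmod (\<Sum>l<n. w$l * x$l))\<^sup>2)"
proof -
  have R: "mat n n (\<lambda>(i,j). complex_of_real k0 * cnj (w$i) * w$j) \<in> carrier_mat n n" by simp
  define T where "T = (\<Sum>l<n. w$l * x$l)"
  have "conjugate x \<bullet> (mat n n (\<lambda>(i,j). complex_of_real k0 * cnj (w$i) * w$j) *\<^sub>v x)
     = (\<Sum>k<n. cnj (x$k) * (\<Sum>l<n. complex_of_real k0 * cnj (w$k) * w$l * x$l))"
    by (simp add: quad[OF x R])
  also have "\<dots> = (\<Sum>k<n. complex_of_real k0 * (cnj (x$k) * cnj (w$k)) * T)"
    by (simp add: T_def sum_distrib_left mult_ac)
  also have "\<dots> = complex_of_real k0 * cnj T * T"
  proof -
    have "cnj T = (\<Sum>k<n. cnj (x$k) * cnj (w$k))" by (simp add: T_def cnj_sum mult.commute)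
    then show ?thesis by (simp add: sum_distrib_left[symmetric] sum_distrib_right[symmetric])
  qed
  also have "\<dots> = complex_of_real (k0 * (cmod T)\<^sup>2)"
  proof -
    have "cnj T * T = complex_of_real ((cmod T)\<^sup>2)"
      by (metis complex_norm_square mult.commute of_real_power)
    then show ?thesis by (simp add: mult.assoc)
  qed
  finally show ?thesis by (simp add: T_def)
qed

lemma rank1_psd:
  fixes k0 :: real
  assumes k0: "k0 \<ge> 0" and w: "dim_vec w = n"
  shows "psd n (mat n n (\<lambda>(i,j). complex_of_real k0 * cnj (w$i) * w$j))"
  unfolding psd_def
proof (intro conjI ballI)
  show "mat n n (\<lambda>(i,j). complex_of_real k0 * cnj (w$i) * w$j) \<in> carrier_mat n n" by simp
  show "mat_adjoint (mat n n (\<lambda>(i,j). complex_of_real k0 * cnj (w$i) * w$j)) = mat n n (\<lambda>(i,j). complex_of_real k0 * cnj (w$i) * w$j)"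
    by (rule eq_matI) (auto simp: adj_index adj_dims)
  fix x :: "complex vec" assume "x \<in> carrier_vec n"
  then show "0 \<le> Re (conjugate x \<bullet> (mat n n (\<lambda>(i,j). complex_of_real k0 * cnj (w$i) * w$j) *\<^sub>v x))"
    using k0 by (simp add: rank1_quad[OF _ w])
qed

lemma rank1_trace:
  fixes k0 :: real
  assumes w: "dim_vec w = n" and wc: "\<forall>i<n. cmod (w$i) = 1"
  shows "mtrace (mat n n (\<lambda>(i,j). complex_of_real k0 * cnj (w$i) * w$j)) = complex_of_real (k0 * real n)"
proof -
  have "cnj (w$i) * w$i = 1" if "i < n" for i
    using wc that complex_norm_square[of "w$i"] by (simp add: mult.commute)
  then show ?thesis by (simp add: mtrace_def mult.assoc)
qed


lemma unit_prod: "cnj z * z = 1 \<longleftrightarrow> cmod z = 1"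
  by (metis complex_norm_square mult.commute norm_ge_zero of_real_eq_1_iff of_real_power power_one real_sqrt_unique real_sqrt_one)

lemma steer_cnj_mult: "k < K \<Longrightarrow> cnj (steer d lam K th $ k) * steer d lam K th $ k = 1"
  using unit_prod steer_cmod by blast

lemma exp_cancel3: "exp (\<i> * complex_of_real A) * exp (\<i> * complex_of_real (- (A + B))) * exp (\<i> * complex_of_real B) = 1"
proof -
  have "exp (\<i> * complex_of_real A) * exp (\<i> * complex_of_real (- (A + B))) * exp (\<i> * complex_of_real B)
     = exp (\<i> * complex_of_real A + \<i> * complex_of_real (- (A + B)) + \<i> * complex_of_real B)"
    by (simp add: exp_add)
  also have "\<i> * complex_of_real A + \<i> * complex_of_real (- (A + B)) + \<i> * complex_of_real B = 0"
    by (simp add: algebra_simps)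
  finally show ?thesis by simp
qed

theorem proposition2:
  fixes N Mt Mr :: nat and P0 \<sigma>2 L d lam \<theta> \<theta>1 \<theta>2 :: real and \<alpha> :: complex
    and Gt Gr :: "complex mat"
  assumes "N > 0" "Mt > 0" "Mr > 0" "P0 > 0" "\<sigma>2 > 0" "L > 0" "d > 0" "lam > 0"
    and Gt_def: "Gt = complex_of_real (sqrt L) \<cdot>\<^sub>m outer (steer d lam N \<theta>2) (steer d lam Mt \<theta>1)"
    and Gr_def: "Gr = complex_of_real (sqrt L) \<cdot>\<^sub>m outer (steer d lam Mr \<theta>1) (steer d lam N \<theta>2)"
  shows
    "(\<forall>R \<phi>. psd Mt R \<and> Re (mtrace R) \<le> P0 \<longrightarrow>
        SNR1 d lam N \<theta> \<alpha> \<sigma>2 Gt Gr R (phase_mat N \<phi>)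
          \<le> P0 * (cmod \<alpha>)\<^sup>2 * L\<^sup>2 * real Mt * real Mr * real N ^ 4 / \<sigma>2)
   \<and> (\<exists>R \<phi>. psd Mt R \<and> Re (mtrace R) \<le> P0 \<and>
        SNR1 d lam N \<theta> \<alpha> \<sigma>2 Gt Gr R (phase_mat N \<phi>)
          = P0 * (cmod \<alpha>)\<^sup>2 * L\<^sup>2 * real Mt * real Mr * real N ^ 4 / \<sigma>2)
   \<and> (\<forall>R \<phi>. psd Mt R \<and> Re (mtrace R) \<le> P0 \<longrightarrow>
        SNR2 d lam N Mr \<theta> \<alpha> \<sigma>2 Gt R (phase_mat N \<phi>)
          \<le> P0 * (cmod \<alpha>)\<^sup>2 * L * real Mt * real Mr * real N ^ 2 / \<sigma>2)
   \<and> (\<exists>R \<phi>. psd Mt R \<and> Re (mtrace R) \<le> P0 \<and>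
        SNR2 d lam N Mr \<theta> \<alpha> \<sigma>2 Gt R (phase_mat N \<phi>)
          = P0 * (cmod \<alpha>)\<^sup>2 * L * real Mt * real Mr * real N ^ 2 / \<sigma>2)"
proof -
  have L: "L > 0" and P0: "P0 > 0" and s2: "\<sigma>2 > 0" and Mt: "Mt > 0" using assms by auto
  define s where "s \<phi> = (\<Sum>n<N. steer d lam N \<theta>2 $ n * exp (\<i> * complex_of_real (\<phi> n)) * steer d lam N \<theta> $ n)" for \<phi>
  have sN: "cmod (s \<phi>) \<le> real N" for \<phi>
  proof -
    have "cmod (s \<phi>) \<le> (\<Sum>n<N. cmod (steer d lam N \<theta>2 $ n * exp (\<i> * complex_of_real (\<phi> n)) * steer d lam N \<theta> $ n))"
      unfolding s_def by (rule norm_sum)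
    also have "\<dots> = real N" by (simp add: norm_mult steer_cmod cmod_exp_ii)
    finally show ?thesis .
  qed
  have vr: "vnorm2 ((Gr * transpose_mat (phase_mat N \<phi>)) *\<^sub>v steer d lam N \<theta>) = L * real Mr * (cmod (s \<phi>))\<^sup>2" for \<phi>
  proof -
    have "vnorm2 ((Gr * transpose_mat (phase_mat N \<phi>)) *\<^sub>v steer d lam N \<theta>)
       = (\<Sum>i<Mr. (cmod (complex_of_real (sqrt L) * steer d lam Mr \<theta>1 $ i * s \<phi>))\<^sup>2)"
      by (simp add: r_vec[OF Gr_def] vnorm2_def s_def)
    also have "\<dots> = (\<Sum>i<Mr. L * (cmod (s \<phi>))\<^sup>2)"
      using L by (intro sum.cong refl) (simp add: norm_mult steer_cmod power_mult_distrib)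
    finally show ?thesis by simp
  qed
  have uv: "(mat_adjoint Gt * mat_adjoint (phase_mat N \<phi>)) *\<^sub>v conjugate (steer d lam N \<theta>)
     = vec Mt (\<lambda>i. complex_of_real (sqrt L) * cnj (steer d lam Mt \<theta>1 $ i) * cnj (s \<phi>))" for \<phi>
    by (simp add: u_vec[OF Gt_def] s_def)
  have tx: "0 \<le> txform (steer d lam N \<theta>) Gt R (phase_mat N \<phi>) \<and>
      txform (steer d lam N \<theta>) Gt R (phase_mat N \<phi>) \<le> real Mt * L * (cmod (s \<phi>))\<^sup>2 * P0"
    if R: "psd Mt R" and tr: "Re (mtrace R) \<le> P0" for R \<phi>
  proof -
    let ?u = "vec Mt (\<lambda>i. complex_of_real (sqrt L) * cnj (steer d lam Mt \<theta>1 $ i) * cnj (s \<phi>))"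
    have uc: "?u \<in> carrier_vec Mt" by simp
    have Rc: "R \<in> carrier_mat Mt Mt" and pos: "\<forall>y \<in> carrier_vec Mt. 0 \<le> Re (conjugate y \<bullet> (R *\<^sub>v y))"
      using R by (auto simp: psd_def)
    have cm: "\<forall>i<Mt. cmod (?u $ i) = sqrt L * cmod (s \<phi>)"
      using L by (simp add: norm_mult steer_cmod)
    have eq: "txform (steer d lam N \<theta>) Gt R (phase_mat N \<phi>) = Re (conjugate ?u \<bullet> (R *\<^sub>v ?u))"
      by (simp add: txform_def Let_def uv)
    have "Re (conjugate ?u \<bullet> (R *\<^sub>v ?u)) \<le> real Mt * (sqrt L * cmod (s \<phi>))\<^sup>2 * Re (mtrace R)"
      by (rule psd_bound[OF Rc pos uc cm])
    also have "\<dots> \<le> real Mt * (sqrt L * cmod (s \<phi>))\<^sup>2 * P0"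
      by (intro mult_left_mono tr) auto
    also have "\<dots> = real Mt * L * (cmod (s \<phi>))\<^sup>2 * P0"
      using L by (simp add: power_mult_distrib)
    finally show ?thesis using eq pos uc by auto
  qed
  have SN: "(cmod (s \<phi>))\<^sup>2 \<le> (real N)\<^sup>2" for \<phi>
    using sN[of \<phi>] by (intro power_mono) auto
  have up1: "SNR1 d lam N \<theta> \<alpha> \<sigma>2 Gt Gr R (phase_mat N \<phi>)
          \<le> P0 * (cmod \<alpha>)\<^sup>2 * L\<^sup>2 * real Mt * real Mr * real N ^ 4 / \<sigma>2"
    if R: "psd Mt R" and tr: "Re (mtrace R) \<le> P0" for R \<phi>
  proof -
    define X where "X = (cmod (s \<phi>))\<^sup>2"
    define t where "t = txform (steer d lam N \<theta>) Gt R (phase_mat N \<phi>)"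
    have t: "0 \<le> t" "t \<le> real Mt * L * X * P0" using tx[OF R tr] by (auto simp: t_def X_def)
    have X: "0 \<le> X" "X \<le> (real N)\<^sup>2" using SN by (auto simp: X_def)
    have "(cmod \<alpha>)\<^sup>2 * (L * real Mr * X) * t \<le> (cmod \<alpha>)\<^sup>2 * (L * real Mr * X) * (real Mt * L * X * P0)"
      using t X L by (intro mult_left_mono) auto
    also have "\<dots> = ((cmod \<alpha>)\<^sup>2 * L\<^sup>2 * real Mr * real Mt * P0) * (X * X)"
      by (simp add: power2_eq_square mult_ac)
    also have "\<dots> \<le> ((cmod \<alpha>)\<^sup>2 * L\<^sup>2 * real Mr * real Mt * P0) * ((real N)\<^sup>2 * (real N)\<^sup>2)"
      using X P0 by (intro mult_left_mono mult_mono) auto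
    finally have "(cmod \<alpha>)\<^sup>2 * (L * real Mr * X) * t \<le> P0 * (cmod \<alpha>)\<^sup>2 * L\<^sup>2 * real Mt * real Mr * real N ^ 4"
      by (simp add: power2_eq_square power4_eq_xxxx mult_ac)
    then show ?thesis using s2
      by (simp add: SNR1_def Let_def vr X_def[symmetric] t_def[symmetric] divide_right_mono)
  qed
  have up2: "SNR2 d lam N Mr \<theta> \<alpha> \<sigma>2 Gt R (phase_mat N \<phi>)
          \<le> P0 * (cmod \<alpha>)\<^sup>2 * L * real Mt * real Mr * real N ^ 2 / \<sigma>2"
    if R: "psd Mt R" and tr: "Re (mtrace R) \<le> P0" for R \<phi>
  proof -
    define X where "X = (cmod (s \<phi>))\<^sup>2"
    define t where "t = txform (steer d lam N \<theta>) Gt R (phase_mat N \<phi>)"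
    have t: "0 \<le> t" "t \<le> real Mt * L * X * P0" using tx[OF R tr] by (auto simp: t_def X_def)
    have X: "0 \<le> X" "X \<le> (real N)\<^sup>2" using SN by (auto simp: X_def)
    have "(cmod \<alpha>)\<^sup>2 * real Mr * t \<le> (cmod \<alpha>)\<^sup>2 * real Mr * (real Mt * L * X * P0)"
      using t by (intro mult_left_mono) auto
    also have "\<dots> = ((cmod \<alpha>)\<^sup>2 * real Mr * real Mt * L * P0) * X"
      by (simp add: mult_ac)
    also have "\<dots> \<le> ((cmod \<alpha>)\<^sup>2 * real Mr * real Mt * L * P0) * (real N)\<^sup>2"
      using X P0 L by (intro mult_left_mono) auto
    finally have "(cmod \<alpha>)\<^sup>2 * real Mr * t \<le> P0 * (cmod \<alpha>)\<^sup>2 * L * real Mt * real Mr * real N ^ 2"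
      by (simp add: mult_ac)
    then show ?thesis using s2
      by (simp add: SNR2_def Let_def vnorm2_steer t_def[symmetric] divide_right_mono)
  qed
  define \<phi>0 where "\<phi>0 n = - (pi * (2 * real n + 1 - real N) * d * sin \<theta>2 / lam + pi * (2 * real n + 1 - real N) * d * sin \<theta> / lam)" for n
  have s0: "s \<phi>0 = of_nat N"
  proof -
    have "s \<phi>0 = (\<Sum>n<N. 1)"
      unfolding s_def
    proof (intro sum.cong refl)
      fix n assume "n \<in> {..<N}"
      then have n: "n < N" by simp
      show "steer d lam N \<theta>2 $ n * exp (\<i> * complex_of_real (\<phi>0 n)) * steer d lam N \<theta> $ n = 1"
        unfolding steer_index[OF n] \<phi>0_def by (rule exp_cancel3)
    qed
    then show ?thesis by simp
  qed
  define c where "c = steer d lam Mt \<theta>1"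
  define k0 where "k0 = P0 / real Mt"
  define R0 where "R0 = mat Mt Mt (\<lambda>(i,j). complex_of_real k0 * cnj (c$i) * c$j)"
  have cd: "dim_vec c = Mt" by (simp add: c_def)
  have R0psd: "psd Mt R0" unfolding R0_def
    using P0 Mt by (intro rank1_psd cd) (simp add: k0_def)
  have R0tr: "Re (mtrace R0) = P0" unfolding R0_def
    using Mt by (subst rank1_trace[OF cd]) (auto simp: c_def steer_cmod k0_def)
  have t0: "txform (steer d lam N \<theta>) Gt R0 (phase_mat N \<phi>0) = P0 * L * (real N)\<^sup>2 * real Mt"
  proof -
    let ?u = "vec Mt (\<lambda>i. complex_of_real (sqrt L) * cnj (c $ i) * cnj (s \<phi>0))"
    have uc: "?u \<in> carrier_vec Mt" by simp
    have sum: "(\<Sum>l<Mt. c$l * ?u$l) = complex_of_real (sqrt L * real N * real Mt)"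
    proof -
      have "(\<Sum>l<Mt. c$l * ?u$l) = (\<Sum>l<Mt. complex_of_real (sqrt L * real N))"
      proof (intro sum.cong refl)
        fix l assume "l \<in> {..<Mt}"
        then have l: "l < Mt" by simp
        have "c$l * ?u$l = complex_of_real (sqrt L) * of_nat N * (cnj (c$l) * c$l)"
          using l by (simp add: s0 mult_ac)
        also have "\<dots> = complex_of_real (sqrt L * real N)"
          using l by (simp add: c_def steer_cnj_mult)
        finally show "c$l * ?u$l = complex_of_real (sqrt L * real N)" .
      qed
      then show ?thesis by simp
    qed
    have "txform (steer d lam N \<theta>) Gt R0 (phase_mat N \<phi>0) = Re (conjugate ?u \<bullet> (R0 *\<^sub>v ?u))"
      by (simp add: txform_def Let_def uv c_def)
    also have "\<dots> = k0 * (cmod (\<Sum>l<Mt. c$l * ?u$l))\<^sup>2"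
      unfolding R0_def by (subst rank1_quad[OF uc cd]) simp
    also have "\<dots> = k0 * (sqrt L * real N * real Mt)\<^sup>2"
      using L by (simp only: sum norm_of_real) simp
    also have "\<dots> = P0 * L * (real N)\<^sup>2 * real Mt"
      using L Mt by (simp add: k0_def power_mult_distrib power2_eq_square)
    finally show ?thesis .
  qed
  have e1: "SNR1 d lam N \<theta> \<alpha> \<sigma>2 Gt Gr R0 (phase_mat N \<phi>0)
          = P0 * (cmod \<alpha>)\<^sup>2 * L\<^sup>2 * real Mt * real Mr * real N ^ 4 / \<sigma>2"
    by (simp add: SNR1_def Let_def vr s0 t0 power2_eq_square power4_eq_xxxx mult_ac)
  have e2: "SNR2 d lam N Mr \<theta> \<alpha> \<sigma>2 Gt R0 (phase_mat N \<phi>0)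
          = P0 * (cmod \<alpha>)\<^sup>2 * L * real Mt * real Mr * real N ^ 2 / \<sigma>2"
    by (simp add: SNR2_def Let_def vnorm2_steer t0 mult_ac)
  show ?thesis
    using up1 up2 e1 e2 R0psd R0tr by (intro conjI allI impI; blast intro: order_refl)
qed

end
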